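(* Let $r\ge3$ be odd. For any $n\ge r$ and $A>0$, there exists $f\in C^r[-1,1]$ with $f\le0$ on $[-1,0]$ and $f\ge0$ on $[0,1]$, such that every algebraic polynomial $P_n$ of degree $\le n$ with $P_n\le0$ on $(-1/n,0)$ and $P_n^{(i)}(0)=f^{(i)}(0)$ for $0\le i\le r$ obeys $$\|f-P_n\|>A\,\|f^{(r)}\|.$$
   Context: $\|\cdot\|$ is the sup norm on $[-1,1]$. *)

theory Defs
  imports "HOL-Analysis.Analysis" "HOL-Computational_Algebra.Polynomial"
begin

definition Cr_on_interval :: "nat \<Rightarrow> (real \<Rightarrow> real) \<Rightarrow> (nat \<Rightarrow> real \<Rightarrow> real) \<Rightarrow> bool" where
  "Cr_on_interval r f D \<longleftrightarrow>
     D 0 = f \<and>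
     (\<forall>i<r. \<forall>x\<in>{-1..1}. (D i has_real_derivative D (Suc i) x) (at x within {-1..1})) \<and>
     continuous_on {-1..1} (D r)"

definition supnorm :: "(real \<Rightarrow> real) \<Rightarrow> real" where
  "supnorm g = (SUP x\<in>{-1..1}. \<bar>g x\<bar>)"

end

theory Submission
  imports Defs "HOL-Analysis.Analysis" "HOL-Computational_Algebra.Polynomial"
begin


lemma diff_poly_degree:
  fixes Q :: "real poly"
  assumes "degree Q \<le> Suc m"
  shows "degree (pcompose Q [:h, 1:] - Q) \<le> m"
proof (cases "degree Q = Suc m")
  case True
  have dc: "degree (pcompose Q [:h, 1:]) = Suc m" using True by (simp add: degree_pcompose)
  have lc: "lead_coeff (pcompose Q [:h, 1:]) = lead_coeff Q"
    using lead_coeff_comp[of "[:h,1:]" Q] by simp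
  show ?thesis
  proof (rule degree_le, intro allI impI)
    fix i assume "m < i"
    show "coeff (pcompose Q [:h, 1:] - Q) i = 0"
    proof (cases "i = Suc m")
      case True then show ?thesis using dc lc \<open>degree Q = Suc m\<close> by simp
    next
      case False then have "i > Suc m" using \<open>m < i\<close> by simp
      then show ?thesis using dc \<open>degree Q = Suc m\<close> by (simp add: coeff_eq_0)
    qed
  qed
next
  case False
  then have "degree Q \<le> m" using assms by simp
  moreover have "degree (pcompose Q [:h, 1:]) \<le> m" using \<open>degree Q \<le> m\<close> by (simp add: degree_pcompose)
  ultimately show ?thesis by (meson degree_diff_le)
qed

lemma fd_identity:
  fixes Q :: "real poly"
  assumes "degree Q \<le> m"
  shows "(\<Sum>j\<le>Suc m. (-1)^j * real (Suc m choose j) * poly Q (y + real j * h)) = 0"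
  using assms
proof (induction m arbitrary: Q)
  case 0
  then obtain c where "Q = [:c:]" by (metis degree_0_id le_zero_eq)
  then show ?case by simp
next
  case (Suc m)
  define Q' where "Q' = pcompose Q [:h, 1:] - Q"
  have pQ': "poly Q' x = poly Q (x + h) - poly Q x" for x
    by (simp add: Q'_def poly_pcompose algebra_simps)
  have "degree Q' \<le> m" unfolding Q'_def using Suc.prems by (rule diff_poly_degree)
  then have IH: "(\<Sum>j\<le>Suc m. (-1)^j * real (Suc m choose j) * poly Q' (y + real j * h)) = 0"
    by (rule Suc.IH)
  define g where "g j = poly Q (y + real j * h)" for j
  have A: "(\<Sum>j\<le>Suc m. (-1)^j * real (Suc m choose j) * poly Q' (y + real j * h))
      = (\<Sum>j\<le>Suc m. (-1)^j * real (Suc m choose j) * g (Suc j))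
        - (\<Sum>j\<le>Suc m. (-1)^j * real (Suc m choose j) * g j)"
    by (simp add: pQ' g_def sum_subtractf algebra_simps)
  have B: "(\<Sum>j\<le>Suc (Suc m). (-1)^j * real (Suc (Suc m) choose j) * g j)
      = g 0 + (\<Sum>j\<le>Suc m. (-1)^(Suc j) * real (Suc (Suc m) choose Suc j) * g (Suc j))"
    by (subst sum.atMost_Suc_shift) simp
  also have "\<dots> = g 0 + (\<Sum>j\<le>Suc m. (-1)^(Suc j) * real (Suc m choose j) * g (Suc j))
      + (\<Sum>j\<le>Suc m. (-1)^(Suc j) * real (Suc m choose Suc j) * g (Suc j))"
  proof -
    have "(-1)^(Suc j) * real (Suc (Suc m) choose Suc j) * g (Suc j) = (-1)^(Suc j) * real (Suc m choose j) * g (Suc j) + (-1)^(Suc j) * real (Suc m choose Suc j) * g (Suc j)" for j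
      by (simp only: binomial_Suc_Suc of_nat_add distrib_left distrib_right)
    then show ?thesis by (simp only: sum.distrib add.assoc)
  qed
  also have "(\<Sum>j\<le>Suc m. (-1)^(Suc j) * real (Suc m choose Suc j) * g (Suc j))
      = (\<Sum>j\<le>Suc m. (-1)^j * real (Suc m choose j) * g j) - g 0"
  proof -
    have "(\<Sum>j\<le>Suc m. (-1)^j * real (Suc m choose j) * g j)
       = g 0 + (\<Sum>j\<le>m. (-1)^(Suc j) * real (Suc m choose Suc j) * g (Suc j))"
      by (subst sum.atMost_Suc_shift) simp
    moreover have "(\<Sum>j\<le>Suc m. (-1)^(Suc j) * real (Suc m choose Suc j) * g (Suc j))
       = (\<Sum>j\<le>m. (-1)^(Suc j) * real (Suc m choose Suc j) * g (Suc j))"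
      by (subst sum.atMost_Suc) (simp del: binomial_Suc_Suc)
    ultimately show ?thesis by simp
  qed
  finally have S2: "(\<Sum>j\<le>Suc (Suc m). (-1)^j * real (Suc (Suc m) choose j) * g j)
     = g 0 + (\<Sum>j\<le>Suc m. (-1)^(Suc j) * real (Suc m choose j) * g (Suc j))
       + ((\<Sum>j\<le>Suc m. (-1)^j * real (Suc m choose j) * g j) - g 0)" .
  have N: "(\<Sum>j\<le>Suc m. (-1)^(Suc j) * real (Suc m choose j) * g (Suc j))
      = - (\<Sum>j\<le>Suc m. (-1)^j * real (Suc m choose j) * g (Suc j))"
    by (simp add: sum_negf[symmetric] del: binomial_Suc_Suc sum.atMost_Suc)
  have "(\<Sum>j\<le>Suc (Suc m). (-1)^j * real (Suc (Suc m) choose j) * g j) = 0"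
    using S2 N A IH by linarith
  then show ?case unfolding g_def .
qed



lemma key_ineq:
  fixes s \<rho> x :: real
  assumes s: "s > 0" and rho: "\<rho> > 0"
  shows "\<bar>sin (pi / s * x)\<bar> \<le> \<bar>x\<bar> * ((30 + 128 / \<rho>) / s^3 * (x + s)^2 + \<rho> / (2 * s))"
proof -
  define \<Lambda> where "\<Lambda> = 30 + 128 / \<rho>"
  have L30: "\<Lambda> \<ge> 30" using rho by (simp add: \<Lambda>_def)
  have L128: "\<Lambda> * \<rho> \<ge> 128" using rho by (simp add: \<Lambda>_def distrib_right)
  have pi4: "pi < 4" by (rule pi_less_4)
  have pi0: "pi > 0" by simp
  define R where "R = \<bar>x\<bar> * (\<Lambda> / s^3 * (x + s)^2 + \<rho> / (2 * s))"
  have t1: "0 \<le> \<Lambda> / s^3 * (x + s)^2" using L30 s by simp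
  have t2: "0 \<le> \<rho> / (2 * s)" using rho s by simp
  have R1: "R \<ge> \<bar>x\<bar> * (\<Lambda> / s^3 * (x + s)^2)"
    unfolding R_def using t2 rho s by (simp add: distrib_left)
  show ?thesis
  proof (cases "\<bar>x\<bar> \<le> s/2")
    case True
    have "x + s \<ge> s/2" using True by linarith
    then have "(x+s)^2 \<ge> (s/2)^2" using s by (intro power_mono) auto
    then have "\<Lambda> / s^3 * (x + s)^2 \<ge> \<Lambda> / s^3 * (s/2)^2" using L30 s
      by (intro mult_left_mono) auto
    moreover have "\<Lambda> / s^3 * (s/2)^2 = \<Lambda> / (4 * s)" using s by (simp add: power2_eq_square power3_eq_cube field_simps)
    moreover have "\<Lambda> / (4 * s) \<ge> pi / s" using s L30 pi4 by (simp add: field_simps)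
    ultimately have "\<Lambda> / s^3 * (x + s)^2 \<ge> pi / s" by linarith
    then have "\<bar>x\<bar> * (\<Lambda> / s^3 * (x + s)^2) \<ge> \<bar>x\<bar> * (pi / s)" by (intro mult_left_mono) auto
    moreover have "\<bar>sin (pi / s * x)\<bar> \<le> \<bar>x\<bar> * (pi / s)"
      using abs_sin_x_le_abs_x[of "pi / s * x"] s by (simp add: abs_mult mult.commute)
    ultimately show ?thesis using R1 unfolding R_def \<Lambda>_def by linarith
  next
    case False
    then have xs: "\<bar>x\<bar> \<ge> s/2" by simp
    have R2: "R \<ge> s/2 * (\<Lambda> / s^3 * (x + s)^2 + \<rho> / (2 * s))"
      unfolding R_def using xs t1 t2 by (intro mult_right_mono) auto
    show ?thesis
    proof (cases "\<bar>x + s\<bar> \<le> s/2")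
      case True
      define u where "u = \<bar>x + s\<bar>"
      have u0: "u \<ge> 0" by (simp add: u_def)
      have "sin (pi / s * x) = - sin (pi / s * (x + s))"
      proof -
        have "pi / s * (x + s) = pi / s * x + pi" using s by (simp add: field_simps)
        then show ?thesis by simp
      qed
      then have sinb: "\<bar>sin (pi / s * x)\<bar> \<le> pi / s * u"
        using abs_sin_x_le_abs_x[of "pi / s * (x + s)"] s by (simp add: abs_mult u_def)
      have eq: "s/2 * (\<Lambda> / s^3 * (x + s)^2 + \<rho> / (2 * s)) = \<Lambda> * u^2 / (2 * s^2) + \<rho> / 4"
        using s by (simp add: u_def power2_eq_square power3_eq_cube field_simps)
      show ?thesis
      proof (cases "u \<ge> 2 * pi * s / \<Lambda>")
        case True
        have "\<Lambda> * u^2 / (2 * s^2) = (\<Lambda> * u / (2 * s^2)) * u" by (simp add: power2_eq_square)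
        moreover have "\<Lambda> * u / (2 * s^2) \<ge> pi / s"
        proof -
          have "\<Lambda> * u \<ge> \<Lambda> * (2 * pi * s / \<Lambda>)" using True L30 by (intro mult_left_mono) auto
          then have "\<Lambda> * u \<ge> 2 * pi * s" using L30 by simp
          then have "\<Lambda> * u * s \<ge> 2 * pi * s * s" using s by (intro mult_right_mono) auto
          then show ?thesis using s by (simp add: field_simps power2_eq_square)
        qed
        ultimately have "\<Lambda> * u^2 / (2 * s^2) \<ge> pi / s * u" using u0 by (metis mult_right_mono)
        moreover have "\<rho> / 4 \<ge> 0" using rho by simp
        ultimately show ?thesis using R2 eq sinb unfolding R_def \<Lambda>_def by linarith
      next
        case False
        then have "u < 2 * pi * s / \<Lambda>" by simp
        then have "pi / s * u \<le> pi / s * (2 * pi * s / \<Lambda>)" using s by (intro mult_left_mono) auto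
        also have "\<dots> = 2 * pi * pi / \<Lambda>" using s by (simp add: field_simps)
        also have "\<dots> \<le> \<rho> / 4"
        proof -
          have "2 * pi * pi \<le> 2 * 4 * 4" using pi4 pi0 by (intro mult_mono) auto
          then have "2 * pi * pi * 4 \<le> \<Lambda> * \<rho>" using L128 by linarith
          then show ?thesis using L30 by (simp add: field_simps)
        qed
        finally have "pi / s * u \<le> \<rho> / 4" .
        moreover have "\<Lambda> * u^2 / (2 * s^2) \<ge> 0" using L30 by simp
        ultimately show ?thesis using R2 eq sinb unfolding R_def \<Lambda>_def by linarith
      qed
    next
      case False
      then have "x + s \<ge> s/2 \<or> x + s \<le> -(s/2)" by linarith
      then have "(x+s)^2 \<ge> (s/2)^2" using s
        by (metis abs_le_square_iff abs_of_pos half_gt_zero linorder_not_le nle_le order.trans False)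
      then have "\<Lambda> / s^3 * (x + s)^2 \<ge> \<Lambda> / s^3 * (s/2)^2" using L30 s
        by (intro mult_left_mono) auto
      moreover have "\<Lambda> / s^3 * (s/2)^2 = \<Lambda> / (4 * s)" using s by (simp add: power2_eq_square power3_eq_cube field_simps)
      ultimately have "s/2 * (\<Lambda> / s^3 * (x + s)^2 + \<rho> / (2 * s)) \<ge> s/2 * (\<Lambda> / (4 * s))"
        using s t2 by (intro mult_left_mono) auto
      moreover have "s/2 * (\<Lambda> / (4 * s)) = \<Lambda> / 8" using s by simp
      ultimately have "R \<ge> 1" using R2 L30 by linarith
      then show ?thesis using abs_sin_le_one[of "pi / s * x"] unfolding R_def \<Lambda>_def by linarith
    qed
  qed
qed



lemma sin_coeff_neg: "sin_coeff i * (-y)^i = -(sin_coeff i * y^i)"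
  by (cases "even i") (simp_all add: sin_coeff_def)

lemma abs_sin_coeff_le: "\<bar>sin_coeff i\<bar> \<le> 1 / fact i"
  by (simp add: sin_coeff_def abs_mult power_abs)

lemma sin_rem_bound:
  "\<bar>sin y - (\<Sum>m<Suc r. sin_coeff m * y^m)\<bar> \<le> 2 * \<bar>y\<bar>^r / fact r"
proof -
  have a: "\<bar>sin y - (\<Sum>m<r. sin_coeff m * y^m)\<bar> \<le> inverse (fact r) * \<bar>y\<bar>^r"
    by (rule Maclaurin_sin_bound)
  have b: "\<bar>sin_coeff r * y^r\<bar> \<le> \<bar>y\<bar>^r / fact r"
  proof -
    have "\<bar>sin_coeff r\<bar> * \<bar>y\<bar>^r \<le> (1 / fact r) * \<bar>y\<bar>^r"
      using abs_sin_coeff_le[of r] by (intro mult_right_mono) auto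
    then show ?thesis by (simp add: abs_mult power_abs)
  qed
  have "sin y - (\<Sum>m<Suc r. sin_coeff m * y^m) = (sin y - (\<Sum>m<r. sin_coeff m * y^m)) - sin_coeff r * y^r"
    by simp
  then have "\<bar>sin y - (\<Sum>m<Suc r. sin_coeff m * y^m)\<bar> \<le> \<bar>sin y - (\<Sum>m<r. sin_coeff m * y^m)\<bar> + \<bar>sin_coeff r * y^r\<bar>"
    by linarith
  also have "\<dots> \<le> \<bar>y\<bar>^r / fact r + \<bar>y\<bar>^r / fact r" using a b by (simp add: divide_inverse mult.commute)
  finally show ?thesis by simp
qed

lemma rho_pos:
  assumes "odd r"
  shows "(\<Sum>m<Suc r. sin_coeff m * pi^m) \<noteq> 0"
proof
  assume S0: "(\<Sum>m<Suc r. sin_coeff m * pi^m) = 0"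
  have a: "\<bar>sin pi - (\<Sum>m<r+4. sin_coeff m * pi^m)\<bar> \<le> inverse (fact (r+4)) * \<bar>pi\<bar>^(r+4)"
    by (rule Maclaurin_sin_bound)
  have e1: "sin_coeff (Suc r) = 0" "sin_coeff (r+3) = 0" using assms by (simp_all add: sin_coeff_def)
  have e2: "\<bar>sin_coeff (r+2)\<bar> = 1 / fact (r+2)" using assms by (simp add: sin_coeff_def)
  have "(\<Sum>m<r+4. sin_coeff m * pi^m) = (\<Sum>m<Suc r. sin_coeff m * pi^m) + sin_coeff (Suc r) * pi^(Suc r)
      + sin_coeff (r+2) * pi^(r+2) + sin_coeff (r+3) * pi^(r+3)"
    by (simp add: numeral_eq_Suc)
  then have "(\<Sum>m<r+4. sin_coeff m * pi^m) = sin_coeff (r+2) * pi^(r+2)" using S0 e1 by simp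
  then have "pi^(r+2) / fact (r+2) \<le> pi^(r+4) / fact (r+4)"
    using a e2 by (simp add: abs_mult divide_inverse mult.commute)
  moreover have "fact (r+4) = (real r + 4) * (real r + 3) * (fact (r+2) :: real)"
    by (simp add: numeral_eq_Suc algebra_simps)
  moreover have "pi^(r+4) = pi^2 * pi^(r+2)"
  proof -
    have "r + 4 = 2 + (r + 2)" by simp
    then show ?thesis by (metis power_add)
  qed
  ultimately have "pi^(r+2) / fact (r+2) \<le> pi^2 / ((real r + 4) * (real r + 3)) * (pi^(r+2) / fact (r+2))"
    by (simp add: field_simps)
  moreover have "pi^(r+2) / fact (r+2) > 0" by simp
  ultimately have "1 \<le> pi^2 / ((real r + 4) * (real r + 3))"
    by (metis mult_1 mult_le_cancel_right_pos)
  moreover have "pi^2 < 16"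
  proof -
    have "pi * pi < 4 * 4" using pi_less_4 pi_gt_zero by (intro mult_strict_mono) auto
    then show ?thesis by (simp add: power2_eq_square)
  qed
  moreover have "(real r + 4) * (real r + 3) \<ge> 20"
  proof -
    have "r \<ge> 1" using assms by (cases r) auto
    then have "real r \<ge> 1" by simp
    then have "(real r + 4) * (real r + 3) \<ge> 5 * 4" by (intro mult_mono) auto
    then show ?thesis by simp
  qed
  ultimately have "pi^2 \<ge> (real r + 4) * (real r + 3)" by (simp add: field_simps)
  then show False using \<open>pi^2 < 16\<close> \<open>(real r + 4) * (real r + 3) \<ge> 20\<close> by linarith
qed

theorem lemma3p13:
  fixes r n :: nat and A :: real
  assumes "odd r" and "r \<ge> 3" and "n \<ge> r" and "A > 0"
  shows "\<exists>f D. Cr_on_interval r f D \<and>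
           (\<forall>x\<in>{-1..0}. f x \<le> 0) \<and> (\<forall>x\<in>{0..1}. f x \<ge> 0) \<and>
           (\<forall>P :: real poly. degree P \<le> n \<longrightarrow>
              (\<forall>x\<in>{-1 / real n<..<0}. poly P x \<le> 0) \<longrightarrow>
              (\<forall>i\<le>r. poly ((pderiv ^^ i) P) 0 = D i 0) \<longrightarrow>
              supnorm (\<lambda>x. f x - poly P x) > A * supnorm (D r))"
proof -
  have r3: "r \<ge> 3" and nr: "n \<ge> r" and A0: "A > 0" using assms by auto
  have n3: "n \<ge> 3" using r3 nr by simp
  define S where "S = (\<Sum>m<Suc r. sin_coeff m * pi^m)"
  have S0: "S \<noteq> 0" unfolding S_def by (rule rho_pos[OF assms(1)])
  define \<rho> where "\<rho> = \<bar>S\<bar>"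
  have rho0: "\<rho> > 0" using S0 by (simp add: \<rho>_def)
  define \<sigma> where "\<sigma> = (if S > 0 then -1 else 1 :: real)"
  have sigS: "\<sigma> * S = - \<rho>" using S0 by (auto simp: \<sigma>_def \<rho>_def)
  have sig1: "\<bar>\<sigma>\<bar> = 1" by (simp add: \<sigma>_def)
  define \<Lambda> where "\<Lambda> = 30 + 128 / \<rho>"
  have Lam0: "\<Lambda> > 0" using rho0 by (simp add: \<Lambda>_def add_pos_pos)
  define K where "K = (2::real)^(Suc n) * (2 * (real n + 1))^(Suc r)"
  have K0: "K > 0" by (simp add: K_def)
  define C where "C = 6 * A * \<Lambda> + (A + 2) * pi^r"
  have C0: "C > 0" using A0 Lam0 by (simp add: C_def add_pos_pos)
  define s where "s = min (1 / (2 * (real n + 1))) (\<rho> / (4 * K * C))"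
  have s0: "s > 0" using rho0 K0 C0 by (simp add: s_def)
  have s1: "s \<le> 1 / (2 * (real n + 1))" by (simp add: s_def)
  have s2: "s \<le> \<rho> / (4 * K * C)" by (simp add: s_def)
  have sle1: "s \<le> 1" using s1 by (smt (verit) divide_le_eq_1_pos of_nat_0_le_iff)
  define \<omega> where "\<omega> = pi / s"
  have om0: "\<omega> > 0" using s0 by (simp add: \<omega>_def)
  define lam where "lam = \<Lambda> / s^3"
  have lam0: "lam > 0" using Lam0 s0 by (simp add: lam_def)
  define \<mu> where "\<mu> = \<rho> / (2 * s)"
  define qd where "qd i x = (if i = 0 then lam * x^3 + 2 * lam * s * x^2 + (lam * s^2 + \<mu>) * x
      else if i = 1 then 3 * lam * x^2 + 4 * lam * s * x + (lam * s^2 + \<mu>)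
      else if i = 2 then 6 * lam * x + 4 * lam * s else if i = 3 then 6 * lam else 0)" for i :: nat and x :: real
  define td where "td i x = \<omega>^i * (-1)^(i div 2) * (if even i then sin (\<omega>*x) else cos (\<omega>*x))"
    for i :: nat and x :: real
  define D where "D i x = qd i x + \<sigma> * td i x" for i x
  define f where "f = D 0"
  have dqd: "(qd i has_real_derivative qd (Suc i) x) (at x)" for i x
  proof -
    consider "i = 0" | "i = 1" | "i = 2" | "i = 3" | "i \<ge> 4" by linarith
    then show ?thesis
    proof cases
      case 1 then show ?thesis unfolding qd_def
        by (auto intro!: derivative_eq_intros simp: algebra_simps power2_eq_square)
    next
      case 2 then show ?thesis unfolding qd_def
        by (auto intro!: derivative_eq_intros simp: algebra_simps)
    next
      case 3 then show ?thesis unfolding qd_def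
        by (auto intro!: derivative_eq_intros simp: algebra_simps)
    next
      case 4 then show ?thesis unfolding qd_def
        by (auto intro!: derivative_eq_intros simp: algebra_simps)
    next
      case 5 then show ?thesis unfolding qd_def
        by (auto intro!: derivative_eq_intros simp: algebra_simps)
    qed
  qed
  have dtd: "(td i has_real_derivative td (Suc i) x) (at x)" for i x
  proof (cases "even i")
    case True
    then have e: "Suc i div 2 = i div 2" by presburger
    show ?thesis unfolding td_def using True e
      by (auto intro!: derivative_eq_intros simp: algebra_simps)
  next
    case False
    then have e: "Suc i div 2 = Suc (i div 2)" by presburger
    show ?thesis unfolding td_def using False e
      by (auto intro!: derivative_eq_intros simp: algebra_simps)
  qed
  have dD: "(D i has_real_derivative D (Suc i) x) (at x)" for i x
    unfolding D_def by (auto intro!: derivative_eq_intros dqd dtd)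
  have Cr: "Cr_on_interval r f D"
    unfolding Cr_on_interval_def
  proof (intro conjI ballI allI impI)
    show "D 0 = f" by (simp add: f_def)
  next
    fix i x assume "i < r" "x \<in> {-1..(1::real)}"
    show "(D i has_real_derivative D (Suc i) x) (at x within {-1..1})"
      using dD by (rule has_field_derivative_at_within)
  next
    show "continuous_on {-1..1} (D r)"
      by (intro continuous_at_imp_continuous_on ballI DERIV_isCont[OF dD])
  qed
  have f_eq: "f x = x * (lam * (x + s)^2 + \<mu>) + \<sigma> * sin (\<omega> * x)" for x
    by (simp add: f_def D_def qd_def td_def algebra_simps power2_eq_square power3_eq_cube)
  have keyb: "\<bar>sin (\<omega> * x)\<bar> \<le> \<bar>x\<bar> * (lam * (x + s)^2 + \<mu>)" for x
    using key_ineq[OF s0 rho0, of x] by (simp add: \<omega>_def lam_def \<mu>_def \<Lambda>_def)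
  have sgb: "\<bar>\<sigma> * sin (\<omega> * x)\<bar> \<le> \<bar>x\<bar> * (lam * (x + s)^2 + \<mu>)" for x
    using keyb[of x] sig1 by (simp add: abs_mult)
  have mu0: "\<mu> > 0" using rho0 s0 by (simp add: \<mu>_def)
  have pos: "lam * (x + s)^2 + \<mu> > 0" for x using lam0 mu0 by (simp add: add_nonneg_pos)
  have fneg: "\<forall>x\<in>{-1..0}. f x \<le> 0"
  proof
    fix x :: real assume "x \<in> {-1..0}"
    then have "x \<le> 0" by simp
    then have "x * (lam * (x + s)^2 + \<mu>) = - (\<bar>x\<bar> * (lam * (x + s)^2 + \<mu>))" by simp
    then show "f x \<le> 0" using f_eq[of x] sgb[of x] by linarith
  qed
  have fpos: "\<forall>x\<in>{0..1}. f x \<ge> 0"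
  proof
    fix x :: real assume "x \<in> {0..1}"
    then have "x \<ge> 0" by simp
    then have "x * (lam * (x + s)^2 + \<mu>) = \<bar>x\<bar> * (lam * (x + s)^2 + \<mu>)" by simp
    then show "f x \<ge> 0" using f_eq[of x] sgb[of x] by linarith
  qed
  define \<delta> where "\<delta> = 6 * lam + \<omega>^r"
  have Dr_bound: "\<bar>D r x\<bar> \<le> \<delta>" for x
  proof -
    have "\<bar>qd r x\<bar> \<le> 6 * lam" using r3 lam0 by (auto simp: qd_def)
    moreover have "\<bar>td r x\<bar> \<le> \<omega>^r"
    proof -
      have "\<bar>(if even r then sin (\<omega>*x) else cos (\<omega>*x))\<bar> \<le> 1" by auto
      then have "\<bar>td r x\<bar> \<le> \<omega>^r * 1" unfolding td_def using om0
        by (simp add: abs_mult mult_left_mono del: abs_sin_le_one abs_cos_le_one)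
      then show ?thesis by simp
    qed
    moreover have "\<bar>\<sigma> * td r x\<bar> = \<bar>td r x\<bar>" using sig1 by (simp add: abs_mult)
    ultimately show ?thesis unfolding D_def \<delta>_def
      using abs_triangle_ineq[of "qd r x" "\<sigma> * td r x"] by linarith
  qed
  have supDr: "supnorm (D r) \<le> \<delta>"
    unfolding supnorm_def by (rule cSUP_least) (auto intro: Dr_bound)
  have fcont: "continuous_on {-1..1} f"
    unfolding f_def by (intro continuous_at_imp_continuous_on ballI DERIV_isCont[OF dD])
  define qp where "qp = [:0, lam * s^2 + \<mu>, 2 * lam * s, lam:]"
  define Ts where "Ts = (\<Sum>i\<le>r. monom (\<omega>^i * sin_coeff i) i)"
  define Tp where "Tp = qp + smult \<sigma> Ts"
  have poly_qp: "poly qp x = qd 0 x" for x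
    by (simp add: qp_def qd_def algebra_simps power2_eq_square power3_eq_cube)
  have poly_Ts: "poly Ts x = (\<Sum>i<Suc r. sin_coeff i * (\<omega> * x)^i)" for x
    unfolding Ts_def poly_sum poly_monom lessThan_Suc_atMost
    by (intro sum.cong) (auto simp: power_mult_distrib)
  have poly_Tp: "poly Tp x = qd 0 x + \<sigma> * (\<Sum>i<Suc r. sin_coeff i * (\<omega> * x)^i)" for x
    by (simp add: Tp_def poly_qp poly_Ts)
  have f_Tp: "f x - poly Tp x = \<sigma> * (sin (\<omega> * x) - (\<Sum>i<Suc r. sin_coeff i * (\<omega> * x)^i))" for x
    by (simp add: poly_Tp f_def D_def td_def algebra_simps)
  have f_Tp_bound: "\<bar>f x - poly Tp x\<bar> \<le> 2 * \<omega>^r" if "x \<in> {-1..1}" for x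
  proof -
    have "\<bar>f x - poly Tp x\<bar> = \<bar>sin (\<omega> * x) - (\<Sum>i<Suc r. sin_coeff i * (\<omega> * x)^i)\<bar>"
      using sig1 by (simp add: f_Tp abs_mult)
    also have "\<dots> \<le> 2 * \<bar>\<omega> * x\<bar>^r / fact r" by (rule sin_rem_bound)
    also have "\<dots> \<le> 2 * \<bar>\<omega> * x\<bar>^r"
    proof -
      have "(1::real) \<le> fact r" by simp
      then have "1 * \<bar>\<omega> * x\<bar>^r \<le> fact r * \<bar>\<omega> * x\<bar>^r" by (intro mult_right_mono) auto
      then show ?thesis by (simp add: field_simps)
    qed
    also have "\<dots> \<le> 2 * \<omega>^r"
    proof -
      have "\<bar>x\<bar> \<le> 1" using that by auto
      then have "\<bar>\<omega> * x\<bar> \<le> \<omega>" using om0 by (simp add: abs_mult mult_left_le)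
      then have "\<bar>\<omega> * x\<bar>^r \<le> \<omega>^r" by (intro power_mono) auto
      then show ?thesis by simp
    qed
    finally show ?thesis .
  qed
  have Tp_s: "poly Tp (-s) = \<rho> / 2"
  proof -
    have "qd 0 (-s) = - \<rho> / 2" using s0 by (simp add: qd_def \<mu>_def power2_eq_square power3_eq_cube algebra_simps)
    moreover have "(\<Sum>i<Suc r. sin_coeff i * (\<omega> * (-s))^i) = - S"
    proof -
      have "\<omega> * (-s) = - pi" using s0 by (simp add: \<omega>_def)
      then have "(\<Sum>i<Suc r. sin_coeff i * (\<omega> * (-s))^i) = (\<Sum>i<Suc r. - (sin_coeff i * pi^i))"
        by (simp add: sin_coeff_neg)
      then show ?thesis by (simp add: S_def sum_negf)
    qed
    ultimately show ?thesis using sigS by (simp add: poly_Tp)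
  qed
  have degTp: "degree Tp \<le> r"
  proof -
    have "degree qp \<le> 3" by (simp add: qp_def)
    then have "degree qp \<le> r" using r3 by simp
    moreover have "degree Ts \<le> r" unfolding Ts_def
      by (rule degree_sum_le) (auto intro: order.trans[OF degree_monom_le])
    then have "degree (smult \<sigma> Ts) \<le> r" by (simp add: order.trans[OF degree_smult_le])
    ultimately show ?thesis unfolding Tp_def using degree_add_le by blast
  qed
  have coeffTp: "fact i * coeff Tp i = D i 0" if "i \<le> r" for i
  proof -
    have cTs: "coeff Ts i = \<omega>^i * sin_coeff i"
      unfolding Ts_def coeff_sum coeff_monom using that by (simp add: sum.delta)
    have q: "fact i * coeff qp i = qd i 0"
    proof -
      consider "i = 0" | "i = 1" | "i = 2" | "i = 3" | "i \<ge> 4" by linarith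
      then show ?thesis
      proof cases
        case 5
        then have "coeff qp i = 0" by (intro coeff_eq_0) (simp add: qp_def)
        then show ?thesis using 5 by (simp add: qd_def)
      qed (simp_all add: qp_def qd_def numeral_eq_Suc)
    qed
    have t: "fact i * (\<omega>^i * sin_coeff i) = td i 0"
    proof (cases "even i")
      case True then show ?thesis by (simp add: td_def sin_coeff_def)
    next
      case False
      then have "(i - Suc 0) div 2 = i div 2" by presburger
      then show ?thesis using False by (simp add: td_def sin_coeff_def)
    qed
    show ?thesis using q t cTs by (simp add: Tp_def D_def algebra_simps)
  qed
  have main: "supnorm (\<lambda>x. f x - poly P x) > A * supnorm (D r)"
    if degP: "degree P \<le> n" and negP: "\<forall>x\<in>{-1 / real n<..<0}. poly P x \<le> 0"
      and jet: "\<forall>i\<le>r. poly ((pderiv ^^ i) P) 0 = D i 0" for P :: "real poly"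
  proof (rule ccontr)
    assume "\<not> ?thesis"
    moreover have "A * supnorm (D r) \<le> A * \<delta>" using supDr A0 by (intro mult_left_mono) auto
    ultimately have sn: "supnorm (\<lambda>x. f x - poly P x) \<le> A * \<delta>" by linarith
    have bdd: "bdd_above ((\<lambda>x. \<bar>f x - poly P x\<bar>) ` {-1..1})"
    proof -
      have "continuous_on {-1..1} (\<lambda>x. \<bar>f x - poly P x\<bar>)"
        by (intro continuous_intros fcont)
      then have "compact ((\<lambda>x. \<bar>f x - poly P x\<bar>) ` {-1..1})"
        by (intro compact_continuous_image) auto
      then show ?thesis by (intro bounded_imp_bdd_above compact_imp_bounded)
    qed
    have fP: "\<bar>f x - poly P x\<bar> \<le> A * \<delta>" if "x \<in> {-1..1}" for x
    proof -
      have "\<bar>f x - poly P x\<bar> \<le> supnorm (\<lambda>x. f x - poly P x)"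
        unfolding supnorm_def using bdd that by (rule cSUP_upper2) auto
      then show ?thesis using sn by linarith
    qed
    define L where "L = A * \<delta> + 2 * \<omega>^r"
    define R where "R = P - Tp"
    have Rb: "\<bar>poly R x\<bar> \<le> L" if "x \<in> {-1..1}" for x
      using fP[OF that] f_Tp_bound[OF that] unfolding R_def L_def by simp
    have cP: "coeff P i = coeff Tp i" if "i \<le> r" for i
    proof -
      have "poly ((pderiv ^^ i) P) 0 = fact i * coeff P i"
        by (simp add: poly_0_coeff_0 coeff_higher_pderiv pochhammer_fact)
      then have "fact i * coeff P i = fact i * coeff Tp i" using jet coeffTp that by simp
      then show ?thesis by simp
    qed
    have cR: "coeff R i = 0" if "i \<le> r" for i using cP[OF that] by (simp add: R_def)
    define Q where "Q = poly_shift (Suc r) R"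
    have RQ: "R = monom 1 (Suc r) * Q"
    proof (rule poly_eqI)
      fix k
      show "coeff R k = coeff (monom 1 (Suc r) * Q) k"
        by (cases "k < Suc r") (auto simp: coeff_monom_mult Q_def coeff_poly_shift cR)
    qed
    have pRQ: "poly R x = x^(Suc r) * poly Q x" for x
      by (subst RQ) (simp add: poly_monom)
    have degR: "degree R \<le> n" unfolding R_def
      using degree_diff_le[of P n Tp] degP degTp nr by simp
    have degQ: "degree Q \<le> n"
    proof (rule degree_le, intro allI impI)
      fix i assume "n < i"
      then have "degree R < i + Suc r" using degR by simp
      then show "coeff Q i = 0" by (simp add: Q_def coeff_poly_shift coeff_eq_0)
    qed
    define h where "h = 1 / (real n + 1)"
    have h0: "h > 0" by (simp add: h_def)
    have hh: "h / 2 = 1 / (2 * (real n + 1))" unfolding h_def by (simp add: divide_divide_eq_left mult.commute)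
    have sh: "s \<le> h / 2" unfolding hh by (rule s1)
    define B where "B = L * (2 * (real n + 1))^(Suc r)"
    have L0: "L \<ge> 0" using Rb[of 0] by simp
    have Qz: "\<bar>poly Q (-s + real (Suc j) * h)\<bar> \<le> B" if "j \<le> n" for j
    proof -
      define z where "z = -s + real (Suc j) * h"
      have zlo: "z \<ge> h / 2"
      proof -
        have "real (Suc j) * h \<ge> 1 * h" using h0 by (intro mult_right_mono) auto
        then show ?thesis using sh by (simp add: z_def)
      qed
      have zhi: "z \<le> 1"
      proof -
        have "real (Suc j) * h \<le> (real n + 1) * h" using h0 that by (intro mult_right_mono) auto
        also have "\<dots> = 1" by (simp add: h_def)
        finally show ?thesis using s0 by (simp add: z_def)
      qed
      have z0: "z > 0" using zlo h0 by simp
      have "z \<in> {-1..1}" using z0 zhi by simp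
      then have "\<bar>z^(Suc r) * poly Q z\<bar> \<le> L" using Rb pRQ by metis
      then have zz: "z^(Suc r) * \<bar>poly Q z\<bar> \<le> L" using z0 by (simp add: abs_mult)
      have hz: "(h/2)^(Suc r) \<le> z^(Suc r)" using zlo h0 by (intro power_mono) auto
      have "(h/2)^(Suc r) * \<bar>poly Q z\<bar> \<le> z^(Suc r) * \<bar>poly Q z\<bar>"
        using hz by (intro mult_right_mono) auto
      then have "(h/2)^(Suc r) * \<bar>poly Q z\<bar> \<le> L" using zz by linarith
      moreover have "(h/2) * (2 * (real n + 1)) = 1" by (simp add: h_def)
      then have "(h/2)^(Suc r) * (2 * (real n + 1))^(Suc r) = 1" by (metis power_mult_distrib power_one)
      ultimately have "((h/2)^(Suc r) * \<bar>poly Q z\<bar>) * (2 * (real n + 1))^(Suc r) \<le> L * (2 * (real n + 1))^(Suc r)"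
        by (intro mult_right_mono) auto
      moreover have "((h/2)^(Suc r) * \<bar>poly Q z\<bar>) * (2 * (real n + 1))^(Suc r) = \<bar>poly Q z\<bar>"
      proof -
        have "((h/2)^(Suc r) * \<bar>poly Q z\<bar>) * (2 * (real n + 1))^(Suc r)
            = \<bar>poly Q z\<bar> * ((h/2)^(Suc r) * (2 * (real n + 1))^(Suc r))" by (simp only: mult_ac)
        then show ?thesis using \<open>(h/2)^(Suc r) * (2 * (real n + 1))^(Suc r) = 1\<close> by simp
      qed
      ultimately have "\<bar>poly Q z\<bar> \<le> L * (2 * (real n + 1))^(Suc r)" by linarith
      then show ?thesis by (simp add: B_def z_def)
    qed
    have fdQ: "(\<Sum>j\<le>Suc n. (-1)^j * real (Suc n choose j) * poly Q (-s + real j * h)) = 0"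
      by (rule fd_identity[OF degQ])
    then have "poly Q (-s) + (\<Sum>j\<le>n. (-1)^(Suc j) * real (Suc n choose Suc j) * poly Q (-s + real (Suc j) * h)) = 0"
      by (subst (asm) sum.atMost_Suc_shift) simp
    then have "\<bar>poly Q (-s)\<bar> = \<bar>\<Sum>j\<le>n. (-1)^(Suc j) * real (Suc n choose Suc j) * poly Q (-s + real (Suc j) * h)\<bar>"
      by linarith
    also have "\<dots> \<le> (\<Sum>j\<le>n. \<bar>(-1)^(Suc j) * real (Suc n choose Suc j) * poly Q (-s + real (Suc j) * h)\<bar>)"
      by (rule sum_abs)
    also have "\<dots> \<le> (\<Sum>j\<le>n. real (Suc n choose Suc j) * B)"
    proof (rule sum_mono)
      fix j assume "j \<in> {..n}"
      then have "\<bar>poly Q (-s + real (Suc j) * h)\<bar> \<le> B" using Qz by simp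
      then have "real (Suc n choose Suc j) * \<bar>poly Q (-s + real (Suc j) * h)\<bar> \<le> real (Suc n choose Suc j) * B"
        by (intro mult_left_mono) auto
      then show "\<bar>(-1)^(Suc j) * real (Suc n choose Suc j) * poly Q (-s + real (Suc j) * h)\<bar> \<le> real (Suc n choose Suc j) * B"
        by (simp add: abs_mult del: binomial_Suc_Suc of_nat_Suc)
    qed
    also have "\<dots> \<le> 2^(Suc n) * B"
    proof -
      have "(\<Sum>j\<le>Suc n. real (Suc n choose j)) = 2^(Suc n)"
        using choose_row_sum[of "Suc n"] by (metis of_nat_numeral of_nat_power of_nat_sum)
      then have "1 + (\<Sum>j\<le>n. real (Suc n choose Suc j)) = 2^(Suc n)"
        by (subst (asm) sum.atMost_Suc_shift) simp
      then have "(\<Sum>j\<le>n. real (Suc n choose Suc j)) \<le> 2^(Suc n)" by linarith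
      then have "(\<Sum>j\<le>n. real (Suc n choose Suc j)) * B \<le> 2^(Suc n) * B"
        using L0 by (intro mult_right_mono) (auto simp: B_def)
      then show ?thesis by (simp add: sum_distrib_right)
    qed
    finally have Qs0: "\<bar>poly Q (-s)\<bar> \<le> 2^(Suc n) * B" .
    have "2^(Suc n) * B = K * L" by (simp only: K_def B_def mult_ac)
    then have Qs: "\<bar>poly Q (-s)\<bar> \<le> K * L" using Qs0 by simp
    have Rs: "\<bar>poly R (-s)\<bar> \<le> s^(Suc r) * (K * L)"
    proof -
      have "\<bar>poly R (-s)\<bar> = s^(Suc r) * \<bar>poly Q (-s)\<bar>" using s0 by (simp add: pRQ abs_mult power_abs)
      then show ?thesis using Qs s0 by (simp add: mult_left_mono)
    qed
    have Ps: "poly P (-s) \<le> 0"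
    proof -
      have "s < 1 / real n"
      proof -
        have "1 / (2 * (real n + 1)) < 1 / real n" using n3 by (simp add: field_simps)
        then show ?thesis using s1 by linarith
      qed
      then have "-s \<in> {-1 / real n<..<0}" using s0 by simp
      then show ?thesis using negP by blast
    qed
    have "\<rho> / 2 \<le> s^(Suc r) * (K * L)"
      using Tp_s Ps Rs unfolding R_def by simp
    moreover have "s^(Suc r) * L \<le> C * s"
    proof -
      obtain k where rk: "r = k + 3" using r3 by (metis add.commute le_Suc_ex)
      have e1: "s^(Suc r) * lam = \<Lambda> * s^(Suc k)"
        using s0 by (simp add: rk lam_def power_add field_simps numeral_eq_Suc)
      have e2: "s^(Suc r) * \<omega>^r = pi^r * s"
        using s0 by (simp add: \<omega>_def power_divide field_simps)
      have "s^(Suc k) \<le> s" using s0 sle1 by (simp add: power_le_one mult_left_le)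
      then have e3: "\<Lambda> * s^(Suc k) \<le> \<Lambda> * s" using Lam0 by (simp add: mult_left_mono)
      have "s^(Suc r) * L = 6 * A * (s^(Suc r) * lam) + (A + 2) * (s^(Suc r) * \<omega>^r)"
        by (simp add: L_def \<delta>_def algebra_simps)
      also have "\<dots> = 6 * A * (\<Lambda> * s^(Suc k)) + (A + 2) * (pi^r * s)" by (simp only: e1 e2)
      also have "\<dots> \<le> 6 * A * (\<Lambda> * s) + (A + 2) * (pi^r * s)" using e3 A0 by simp
      also have "\<dots> = C * s" by (simp add: C_def algebra_simps)
      finally show ?thesis .
    qed
    ultimately have "\<rho> / 2 \<le> K * (C * s)"
    proof -
      assume a: "\<rho> / 2 \<le> s^(Suc r) * (K * L)" and b: "s^(Suc r) * L \<le> C * s"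
      have "s^(Suc r) * (K * L) = K * (s^(Suc r) * L)" by (simp add: algebra_simps)
      also have "\<dots> \<le> K * (C * s)" using b K0 by (intro mult_left_mono) auto
      finally show ?thesis using a by linarith
    qed
    also have "\<dots> \<le> K * (C * (\<rho> / (4 * K * C)))" using s2 K0 C0 by (intro mult_left_mono) auto
    also have "\<dots> = \<rho> / 4" using K0 C0 by (simp add: field_simps)
    finally show False using rho0 by simp
  qed
  show ?thesis
    by (rule exI[of _ f], rule exI[of _ D]) (use Cr fneg fpos main in blast)
qed

end
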